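(* Proportional approval voting (PAV) is the only Thiele rule (for the fixed $m$ and $k$) that satisfies party-proportionality.
   Context: Let $\mathcal C=\{c_1,\dots,c_m\}$ ($m\ge2$) be the candidates, $\mathcal A$ the set of non-empty subsets of $\mathcal C$ (ballots), and a profile a map $A:N_A\to\mathcal A$ from a non-empty finite set of voters $N_A\subseteq\mathbb N$. Fix $k\in\{1,\dots,m-1\}$, and let $\mathcal W_k$ be the set of $k$-element subsets of $\mathcal C$ (committees). An ABC voting rule maps each profile to a non-empty subset of $\mathcal W_k$. A Thiele rule is an ABC voting rule for which there is a non-decreasing $s:\{0,\dots,k\}\to\mathbb R$ with $s(0)=0$ such that $f(A)$ is the set of committees $W$ maximizing $\sum_{i\in N_A}s(|A_i\cap W|)$. PAV is the Thiele rule with $s(x)=\sum_{z=1}^x\frac1z$. A profile $A$ is a party-list profile if there is a partition $\mathcal P_A=\{P_1,\dots,P_\ell\}$ of $\mathcal C$ such that every voter's ballot equals some $P_j$; $n_j$ denotes the number of voters whose ballot is $P_j$. An ABC voting rule $f$ is party-proportional if for all party-list profiles $A$, all $W\in f(A)$, and all parties $P_i,P_j\in\mathcal P_A$ with $n_i/|P_i|<n_j/|P_j|$, $P_i\subseteq W$ implies $P_j\subseteq W$. *)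

theory Defs
  imports Complex_Main "HOL-Library.Disjoint_Sets"
begin

type_synonym 'c profile = "nat \<rightharpoonup> 'c set"

definition ballots :: "'c set \<Rightarrow> 'c set set" where
  "ballots C = {B. B \<subseteq> C \<and> B \<noteq> {}}"

definition is_profile :: "'c set \<Rightarrow> 'c profile \<Rightarrow> bool" where
  "is_profile C A \<longleftrightarrow> finite (dom A) \<and> dom A \<noteq> {} \<and> ran A \<subseteq> ballots C"

definition committees :: "'c set \<Rightarrow> nat \<Rightarrow> 'c set set" where
  "committees C k = {W. W \<subseteq> C \<and> card W = k}"

definition abc_rule :: "'c set \<Rightarrow> nat \<Rightarrow> ('c profile \<Rightarrow> 'c set set) \<Rightarrow> bool" where
  "abc_rule C k f \<longleftrightarrow>
     (\<forall>A. is_profile C A \<longrightarrow> f A \<noteq> {} \<and> f A \<subseteq> committees C k)"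

definition thiele_score :: "(nat \<Rightarrow> real) \<Rightarrow> 'c profile \<Rightarrow> 'c set \<Rightarrow> real" where
  "thiele_score s A W = (\<Sum>i\<in>dom A. s (card (the (A i) \<inter> W)))"

definition thiele_winners :: "'c set \<Rightarrow> nat \<Rightarrow> (nat \<Rightarrow> real) \<Rightarrow> 'c profile \<Rightarrow> 'c set set" where
  "thiele_winners C k s A =
     {W \<in> committees C k. \<forall>W'\<in>committees C k. thiele_score s A W' \<le> thiele_score s A W}"

definition thiele_rule :: "'c set \<Rightarrow> nat \<Rightarrow> ('c profile \<Rightarrow> 'c set set) \<Rightarrow> bool" where
  "thiele_rule C k f \<longleftrightarrow> abc_rule C k f \<and>
     (\<exists>s :: nat \<Rightarrow> real. s 0 = 0 \<and> mono_on {0..k} s \<and>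
        (\<forall>A. is_profile C A \<longrightarrow> f A = thiele_winners C k s A))"

definition pav_score :: "nat \<Rightarrow> real" where
  "pav_score x = (\<Sum>z=1..x. 1 / real z)"

definition pav :: "'c set \<Rightarrow> nat \<Rightarrow> 'c profile \<Rightarrow> 'c set set" where
  "pav C k A = thiele_winners C k pav_score A"

definition party_partition :: "'c set \<Rightarrow> 'c profile \<Rightarrow> 'c set set \<Rightarrow> bool" where
  "party_partition C A P \<longleftrightarrow> partition_on C P \<and> ran A \<subseteq> P"

definition party_list_profile :: "'c set \<Rightarrow> 'c profile \<Rightarrow> bool" where
  "party_list_profile C A \<longleftrightarrow> is_profile C A \<and> (\<exists>P. party_partition C A P)"

definition supporters :: "'c profile \<Rightarrow> 'c set \<Rightarrow> nat" where
  "supporters A B = card {i \<in> dom A. A i = Some B}"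

definition party_proportional :: "'c set \<Rightarrow> ('c profile \<Rightarrow> 'c set set) \<Rightarrow> bool" where
  "party_proportional C f \<longleftrightarrow>
     (\<forall>A P. is_profile C A \<longrightarrow> party_partition C A P \<longrightarrow>
        (\<forall>W\<in>f A. \<forall>Pi\<in>P. \<forall>Pj\<in>P.
           real (supporters A Pi) / real (card Pi) < real (supporters A Pj) / real (card Pj) \<longrightarrow>
           Pi \<subseteq> W \<longrightarrow> Pj \<subseteq> W))"

end

theory Submission imports Defs begin
lemma score_eq:
  assumes "finite (dom A)" "ran A \<subseteq> T" "finite T"
  shows "thiele_score s A W = (\<Sum>B\<in>T. real (supporters A B) * s (card (B \<inter> W)))"
proof -
  have img: "(\<lambda>i. the (A i)) ` dom A \<subseteq> T"
    using assms(2) by (auto simp: ran_def)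
  have "thiele_score s A W = (\<Sum>B\<in>T. \<Sum>i\<in>{i. i \<in> dom A \<and> the (A i) = B}. s (card (the (A i) \<inter> W)))"
    unfolding thiele_score_def using sum.group[OF assms(1) assms(3) img, of "\<lambda>i. s (card (the (A i) \<inter> W))"] by (simp only:)
  also have "\<dots> = (\<Sum>B\<in>T. real (supporters A B) * s (card (B \<inter> W)))"
  proof (rule sum.cong[OF refl])
    fix B assume "B \<in> T"
    have e: "{i. i \<in> dom A \<and> the (A i) = B} = {i \<in> dom A. A i = Some B}" by auto
    show "(\<Sum>i\<in>{i. i \<in> dom A \<and> the (A i) = B}. s (card (the (A i) \<inter> W))) = real (supporters A B) * s (card (B \<inter> W))"
      unfolding e supporters_def by simp
  qed
  finally show ?thesis .
qed

lemma winner_strict: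
  assumes "W1 \<in> thiele_winners C k s A" "W2 \<in> committees C k" "W2 \<notin> thiele_winners C k s A"
  shows "thiele_score s A W2 < thiele_score s A W1"
  using assms unfolding thiele_winners_def by force

lemma pav_Suc: "pav_score (Suc n) = pav_score n + 1 / real (Suc n)"
  unfolding pav_score_def by (simp add: sum.cl_ivl_Suc)

lemma pav_pp:
  assumes fin: "finite C" and prof: "is_profile C A" and pp: "party_partition C A P"
    and win: "W \<in> thiele_winners C k pav_score A"
    and Qi: "Qi \<in> P" and Qj: "Qj \<in> P"
    and rat: "real (supporters A Qi) / real (card Qi) < real (supporters A Qj) / real (card Qj)"
    and sub: "Qi \<subseteq> W"
  shows "Qj \<subseteq> W"
proof (rule ccontr)
  assume nsub: "\<not> Qj \<subseteq> W"
  then obtain b where b: "b \<in> Qj" "b \<notin> W" by blast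
  have part: "partition_on C P" and ranP: "ran A \<subseteq> P" using pp by (auto simp: party_partition_def)
  have PC: "\<And>B. B \<in> P \<Longrightarrow> B \<subseteq> C" using part by (auto simp: partition_on_def)
  have Pne: "\<And>B. B \<in> P \<Longrightarrow> B \<noteq> {}" using part by (auto simp: partition_on_def)
  have disj: "\<And>B B'. B \<in> P \<Longrightarrow> B' \<in> P \<Longrightarrow> B \<noteq> B' \<Longrightarrow> B \<inter> B' = {}"
    using part by (auto simp: partition_on_def disjoint_def)
  have finP: "finite P" using PC fin by (meson Pow_iff finite_Pow_iff rev_finite_subset subsetI)
  have neq: "Qi \<noteq> Qj" using rat by auto
  obtain a where a: "a \<in> Qi" using Pne[OF Qi] by blast
  have aW: "a \<in> W" using a sub by blast
  have bPi: "b \<notin> Qi" using b sub by blast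
  have aPj: "a \<notin> Qj" using disj[OF Qi Qj neq] a by blast
  have Wc: "W \<in> committees C k" using win by (simp add: thiele_winners_def)
  hence WC: "W \<subseteq> C" and cW: "card W = k" by (auto simp: committees_def)
  have finW: "finite W" using WC fin finite_subset by blast
  define W' where "W' = insert b (W - {a})"
  have bC: "b \<in> C" using PC[OF Qj] b by blast
  have "card W > 0" using aW finW card_gt_0_iff by blast
  have W'c: "W' \<in> committees C k"
    unfolding committees_def W'_def using WC bC b aW finW cW \<open>card W > 0\<close> by (auto simp: card_insert_if)
  have finPi: "finite Qi" "finite Qj" using PC[OF Qi] PC[OF Qj] fin finite_subset by blast+
  define ni where "ni = supporters A Qi"
  define nj where "nj = supporters A Qj"
  define t where "t = card (Qj \<inter> W)"
  have ct: "card (Qj \<inter> W') = Suc t"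
  proof -
    have "Qj \<inter> W' = insert b (Qj \<inter> W)" unfolding W'_def using b aPj by auto
    thus ?thesis using b finW unfolding t_def by simp
  qed
  have tlt: "Suc t \<le> card Qj"
    using ct card_mono[OF finPi(2), of "Qj \<inter> W'"] by auto
  have ci: "card (Qi \<inter> W) = card Qi" using sub by (simp add: Int_absorb2)
  have ci': "card (Qi \<inter> W') = card Qi - 1"
  proof -
    have "Qi \<inter> W' = Qi - {a}" unfolding W'_def using sub bPi by auto
    thus ?thesis using a finPi by simp
  qed
  have cpos: "card Qi \<ge> 1" using a finPi(1) card_gt_0_iff[of Qi] by (metis One_nat_def Suc_leI empty_iff)
  have other: "\<And>B. B \<in> P - {Qi, Qj} \<Longrightarrow> B \<inter> W' = B \<inter> W"
  proof -
    fix B assume B: "B \<in> P - {Qi, Qj}"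
    have "B \<in> P" "B \<noteq> Qi" "B \<noteq> Qj" using B by auto
    hence "B \<inter> Qi = {}" "B \<inter> Qj = {}" using disj Qi Qj by auto
    hence "a \<notin> B" "b \<notin> B" using a b by auto
    thus "B \<inter> W' = B \<inter> W" unfolding W'_def by auto
  qed
  define g where "g B = real (supporters A B) * (pav_score (card (B \<inter> W')) - pav_score (card (B \<inter> W)))" for B
  have fd: "finite (dom A)" using prof by (simp add: is_profile_def)
  have "thiele_score pav_score A W' - thiele_score pav_score A W = (\<Sum>B\<in>P. g B)"
    unfolding score_eq[OF fd ranP finP] g_def by (simp add: sum_subtractf right_diff_distrib)
  also have "\<dots> = (\<Sum>B\<in>{Qi, Qj}. g B)"
    by (rule sum.mono_neutral_right[OF finP]) (use Qi Qj other in \<open>auto simp: g_def\<close>)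
  also have "\<dots> = g Qi + g Qj" using neq by simp
  also have "g Qi = - real ni / real (card Qi)"
  proof -
    obtain q where q: "card Qi = Suc q" using cpos by (cases "card Qi") auto
    show ?thesis unfolding g_def ni_def ci ci' q by (simp add: pav_Suc)
  qed
  also have "g Qj = real nj / real (Suc t)"
    unfolding g_def nj_def ct t_def[symmetric] by (simp add: pav_Suc)
  finally have diff: "thiele_score pav_score A W' - thiele_score pav_score A W = real nj / real (Suc t) - real ni / real (card Qi)" by simp
  have "real nj / real (card Qj) \<le> real nj / real (Suc t)"
    using tlt by (intro divide_left_mono) auto
  with rat have "real ni / real (card Qi) < real nj / real (Suc t)" unfolding ni_def nj_def by linarith
  with diff have "thiele_score pav_score A W < thiele_score pav_score A W'" by linarith
  with win W'c show False unfolding thiele_winners_def by force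
qed

lemma key:
  fixes C :: "'c set" and s :: "nat \<Rightarrow> real" and f :: "'c profile \<Rightarrow> 'c set set"
  assumes fin: "finite C" and cardC: "k + 1 \<le> card C" and x: "x < k"
    and n1: "1 \<le> n1" and n2: "1 \<le> n2"
    and abc: "abc_rule C k f" and fs: "\<forall>A. is_profile C A \<longrightarrow> f A = thiele_winners C k s A"
    and pp: "party_proportional C f" and s0: "s 0 = 0"
  shows "(n2*(x+1) < n1 \<longrightarrow> real n1 * s x + real n2 * s 1 < real n1 * s (x+1)) \<and>
         (n1 < n2*(x+1) \<longrightarrow> real n1 * s (x+1) < real n1 * s x + real n2 * s 1)"
proof -
  obtain S where SC: "S \<subseteq> C" and cS: "card S = k + 1" and finS: "finite S"
    using obtain_subset_with_card_n[OF cardC] by blast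
  obtain c where c: "c \<in> S" using cS by fastforce
  have cSc: "card (S - {c}) = k" using c cS finS by simp
  obtain P1 where P1S: "P1 \<subseteq> S - {c}" and cP1: "card P1 = x + 1" and finP1: "finite P1"
    using obtain_subset_with_card_n[of "x+1" "S - {c}"] cSc x by auto
  define D where "D = S - {c} - P1"
  have cD: "card D = k - (x + 1)" unfolding D_def using card_Diff_subset[OF finP1 P1S] cSc cP1 by simp
  have finD: "finite D" unfolding D_def using finS by simp
  define Z where "Z = C - S"
  define N where "N = (n1 + n2 + 1) * card D"
  define A :: "'c profile" where "A = (\<lambda>i. if i < n1 then Some P1 else if i < n1 + n2 then Some {c}
      else if i < n1 + n2 + N then Some D else None)"
  define P where "P = {P1, {c}} \<union> (if D = {} then {} else {D}) \<union> (\<lambda>z. {z}) ` Z"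
  have P1ne: "P1 \<noteq> {}" using cP1 by auto
  have cP1n: "c \<notin> P1" using P1S by auto
  have cDn: "c \<notin> D" unfolding D_def by auto
  have P1D: "P1 \<inter> D = {}" unfolding D_def by auto
  have SU: "S = insert c (P1 \<union> D)" unfolding D_def using c P1S by auto
  have ne1: "P1 \<noteq> {c}" using cP1n P1ne by auto
  have ne2: "P1 \<noteq> D" using P1D P1ne by auto
  have ne3: "{c} \<noteq> D" using cDn by auto
  have domA: "dom A = {..<n1 + n2 + N}" unfolding A_def by (auto simp: dom_def)
  have ranA: "ran A \<subseteq> {P1, {c}, D}" unfolding A_def ran_def by auto
  have DranN: "D \<in> ran A \<Longrightarrow> D \<noteq> {}"
  proof -
    assume "D \<in> ran A"
    then obtain i where "A i = Some D" by (auto simp: ran_def)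
    hence "N > 0" using ne2 ne3 unfolding A_def by (auto split: if_splits)
    thus "D \<noteq> {}" unfolding N_def by auto
  qed
  have sup1: "supporters A P1 = n1"
  proof -
    have "{i \<in> dom A. A i = Some P1} = {..<n1}" unfolding A_def using ne1 ne2 by (auto simp: dom_def)
    thus ?thesis unfolding supporters_def by simp
  qed
  have sup2: "supporters A {c} = n2"
  proof -
    have "{i \<in> dom A. A i = Some {c}} = {n1..<n1+n2}" unfolding A_def using ne1 ne3 by (auto simp: dom_def)
    thus ?thesis unfolding supporters_def by simp
  qed
  have sup3: "supporters A D = N"
  proof -
    have "{i \<in> dom A. A i = Some D} = {n1+n2..<n1+n2+N}" unfolding A_def using ne2 ne3 by (auto simp: dom_def)
    thus ?thesis unfolding supporters_def by simp
  qed
  have supz: "\<And>z. z \<in> Z \<Longrightarrow> supporters A {z} = 0"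
  proof -
    fix z assume z: "z \<in> Z"
    hence "{z} \<noteq> P1" "{z} \<noteq> {c}" "{z} \<noteq> D" using P1S c unfolding Z_def D_def by auto
    hence "{i \<in> dom A. A i = Some {z}} = {}" unfolding A_def by (auto simp: dom_def)
    thus "supporters A {z} = 0" unfolding supporters_def by (simp only: card.empty)
  qed
  have prof: "is_profile C A"
    unfolding is_profile_def
  proof (intro conjI)
    show "finite (dom A)" using domA by simp
    show "dom A \<noteq> {}" using domA n1 by auto
    show "ran A \<subseteq> ballots C"
    proof
      fix B assume B: "B \<in> ran A"
      hence "B = P1 \<or> B = {c} \<or> B = D" using ranA by auto
      moreover have "P1 \<subseteq> C" "{c} \<subseteq> C" "D \<subseteq> C" using P1S c SC unfolding D_def by auto
      ultimately show "B \<in> ballots C" unfolding ballots_def using P1ne DranN B by auto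
    qed
  qed
  have part: "party_partition C A P"
    unfolding party_partition_def
  proof
    show "ran A \<subseteq> P" using ranA DranN unfolding P_def by auto
    show "partition_on C P"
    proof (rule partition_onI)
      show "\<Union> P = C" unfolding P_def Z_def using SU SC by (auto split: if_splits)
      show "{} \<notin> P" unfolding P_def using P1ne by auto
      fix p q assume "p \<in> P" "q \<in> P" "p \<noteq> q"
      thus "disjnt p q" unfolding P_def Z_def disjnt_def using SU cP1n cDn P1D by (auto split: if_splits)
    qed
  qed
  have PP: "\<And>W Q1 Q2. W \<in> f A \<Longrightarrow> Q1 \<in> P \<Longrightarrow> Q2 \<in> P \<Longrightarrow>
     real (supporters A Q1) / real (card Q1) < real (supporters A Q2) / real (card Q2) \<Longrightarrow> Q1 \<subseteq> W \<Longrightarrow> Q2 \<subseteq> W"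
    using pp prof part unfolding party_proportional_def by blast
  have inP: "P1 \<in> P" "{c} \<in> P" "D \<noteq> {} \<Longrightarrow> D \<in> P" "\<And>z. z \<in> Z \<Longrightarrow> {z} \<in> P" unfolding P_def by auto
  have fA: "f A = thiele_winners C k s A" using fs prof by blast
  have fAne: "f A \<noteq> {}" and fAc: "f A \<subseteq> committees C k" using abc prof unfolding abc_rule_def by auto
  have rD: "D \<noteq> {} \<Longrightarrow> real (supporters A D) / real (card D) = real (n1 + n2 + 1)"
  proof -
    assume "D \<noteq> {}"
    hence "real (card D) \<noteq> 0" using finD by simp
    thus ?thesis unfolding sup3 N_def by (simp only: of_nat_mult) simp
  qed
  have r1: "real (supporters A P1) / real (card P1) = real n1 / real (x + 1)" using sup1 cP1 by simp
  have r2: "real (supporters A {c}) / real (card {c}) = real n2" using sup2 by simp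
  have rz: "\<And>z. z \<in> Z \<Longrightarrow> real (supporters A {z}) / real (card {z}) = 0" using supz by simp
  have r1pos: "real n1 / real (x + 1) > 0" using n1 by simp
  have r1le: "real n1 / real (x + 1) \<le> real n1" using n1 by (simp add: divide_le_eq)
  have winS: "\<And>W. W \<in> f A \<Longrightarrow> \<exists>e. (e \<in> P1 \<or> e = c) \<and> W = S - {e}"
  proof -
    fix W assume W: "W \<in> f A"
    have Wc: "W \<subseteq> C" "card W = k" using W fAc by (auto simp: committees_def)
    have finW: "finite W" using Wc fin finite_subset by blast
    have WS: "W \<subseteq> S"
    proof
      fix z assume zW: "z \<in> W"
      show "z \<in> S"
      proof (rule ccontr)
        assume "z \<notin> S"
        hence zZ: "z \<in> Z" using zW Wc unfolding Z_def by auto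
        have zsub: "{z} \<subseteq> W" using zW by auto
        have "P1 \<subseteq> W" using PP[OF W inP(4)[OF zZ] inP(1) _ zsub] rz[OF zZ] r1 r1pos by simp
        moreover have "{c} \<subseteq> W" using PP[OF W inP(4)[OF zZ] inP(2) _ zsub] rz[OF zZ] r2 n2 by simp
        moreover have "D \<subseteq> W"
        proof (cases "D = {}")
          case False
          show ?thesis using PP[OF W inP(4)[OF zZ] inP(3)[OF False] _ zsub] rz[OF zZ] rD[OF False] by simp
        qed simp
        ultimately have "insert z S \<subseteq> W" using SU zW by auto
        hence "card (insert z S) \<le> card W" using finW card_mono by blast
        thus False using \<open>z \<notin> S\<close> finS cS Wc by simp
      qed
    qed
    have "card (S - W) = 1" using card_Diff_subset[OF finW WS] cS Wc by simp
    then obtain e where e: "S - W = {e}" using card_1_singletonE by blast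
    have eS: "e \<in> S" and WSe: "W = S - {e}" using e WS by auto
    have "e \<notin> D"
    proof
      assume eD: "e \<in> D"
      hence Dne: "D \<noteq> {}" by auto
      have "{c} \<subseteq> W" using WSe c cDn eD by auto
      hence "D \<subseteq> W" using PP[OF W inP(2) inP(3)[OF Dne]] r2 rD[OF Dne] by simp
      thus False using eD WSe by auto
    qed
    thus "\<exists>e. (e \<in> P1 \<or> e = c) \<and> W = S - {e}" using eS WSe SU by auto
  qed
  have comm: "\<And>e. e \<in> S \<Longrightarrow> S - {e} \<in> committees C k"
    unfolding committees_def using SC cS finS by auto
  have TA: "finite {P1, {c}, D}" by simp
  have fdA: "finite (dom A)" using domA by simp
  have score: "\<And>W. thiele_score s A W = real n1 * s (card (P1 \<inter> W)) + real n2 * s (card ({c} \<inter> W)) + real N * s (card (D \<inter> W))"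
    unfolding score_eq[OF fdA ranA TA] using ne1 ne2 ne3 sup1 sup2 sup3 by simp
  obtain a where a: "a \<in> P1" using P1ne by blast
  have aS: "a \<in> S" using a P1S by auto
  have "card (P1 \<inter> (S - {a})) = x" using a P1S finP1 cP1
    by (metis Diff_Diff_Int Diff_subset add_diff_cancel_right' card_Diff_singleton inf.absorb_iff2 subset_trans Int_commute Int_Diff)
  moreover have "{c} \<inter> (S - {a}) = {c}" using c a cP1n by auto
  moreover have "D \<inter> (S - {a}) = D" using a P1D D_def by auto
  ultimately have sa: "thiele_score s A (S - {a}) = real n1 * s x + real n2 * s 1 + real N * s (card D)"
    using score by simp
  have "P1 \<inter> (S - {c}) = P1" using cP1n P1S by auto
  moreover have "{c} \<inter> (S - {c}) = {}" by auto
  moreover have "D \<inter> (S - {c}) = D" using cDn D_def by auto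
  ultimately have sc: "thiele_score s A (S - {c}) = real n1 * s (x+1) + real N * s (card D)"
    using score cP1 s0 by simp
  have ac: "S - {a} \<noteq> S - {c}" using a cP1n aS c by auto
  show ?thesis
  proof (intro conjI impI)
    assume lt: "n2 * (x + 1) < n1"
    have rlt: "real n2 < real n1 / real (x + 1)"
    proof -
      have "real n2 * real (x+1) < real n1" using lt by (metis of_nat_less_iff of_nat_mult)
      thus ?thesis by (simp add: field_simps)
    qed
    have all: "\<And>W. W \<in> f A \<Longrightarrow> W = S - {c}"
    proof -
      fix W assume W: "W \<in> f A"
      obtain e where e: "e \<in> P1 \<or> e = c" "W = S - {e}" using winS[OF W] by blast
      show "W = S - {c}"
      proof (cases "e = c")
        case False
        hence "e \<in> P1" using e by auto
        have "{c} \<subseteq> W" using e False c by auto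
        hence "P1 \<subseteq> W" using PP[OF W inP(2) inP(1)] r1 r2 rlt by simp
        thus ?thesis using \<open>e \<in> P1\<close> e by auto
      qed (use e in auto)
    qed
    have w1: "S - {c} \<in> thiele_winners C k s A" using fAne all fA by fastforce
    have w2: "S - {a} \<notin> thiele_winners C k s A" using all fA ac by blast
    show "real n1 * s x + real n2 * s 1 < real n1 * s (x + 1)"
      using winner_strict[OF w1 comm[OF aS] w2] sa sc by simp
  next
    assume lt: "n1 < n2 * (x + 1)"
    have rlt: "real n1 / real (x + 1) < real n2"
    proof -
      have "real n1 < real n2 * real (x+1)" using lt by (metis of_nat_less_iff of_nat_mult)
      thus ?thesis by (simp add: field_simps)
    qed
    have nc: "S - {c} \<notin> f A"
    proof
      assume W: "S - {c} \<in> f A"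
      have "P1 \<subseteq> S - {c}" using P1S by auto
      hence "{c} \<subseteq> S - {c}" using PP[OF W inP(1) inP(2)] r1 r2 rlt by simp
      thus False by auto
    qed
    obtain W0 where W0: "W0 \<in> f A" using fAne by blast
    obtain e where e: "e \<in> P1" "W0 = S - {e}" using winS[OF W0] nc W0 by blast
    have eS: "e \<in> S" using e P1S by auto
    have "thiele_score s A (S - {e}) = thiele_score s A (S - {a})"
    proof -
      have "card (P1 \<inter> (S - {e})) = x" using e P1S finP1 cP1
        by (metis Diff_Diff_Int Diff_subset add_diff_cancel_right' card_Diff_singleton inf.absorb_iff2 subset_trans Int_commute Int_Diff)
      moreover have "{c} \<inter> (S - {e}) = {c}" using c e cP1n by auto
      moreover have "D \<inter> (S - {e}) = D" using e P1D D_def by auto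
      ultimately show ?thesis using score sa by simp
    qed
    moreover have "S - {e} \<in> thiele_winners C k s A" using W0 e fA by simp
    moreover have "S - {c} \<notin> thiele_winners C k s A" using nc fA by simp
    ultimately show "real n1 * s (x + 1) < real n1 * s x + real n2 * s 1"
      using winner_strict[OF _ comm[OF c]] sa sc by fastforce
  qed
qed

lemma arch_le0:
  fixes d e :: real
  assumes "\<And>n::nat. n \<ge> 1 \<Longrightarrow> real n * e < d"
  shows "e \<le> 0"
proof (rule ccontr)
  assume "\<not> e \<le> 0"
  hence e: "e > 0" by simp
  obtain n :: nat where n: "d < real n * e" using ex_less_of_nat_mult[OF e] by blast
  have "real n * e \<le> real (n+1) * e" using e by (intro mult_right_mono) auto
  moreover have "real (n+1) * e < d" using assms[of "n+1"] by simp
  ultimately show False using n by linarith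
qed

theorem proposition2:
  fixes C :: "'c set" and k :: nat and f :: "'c profile \<Rightarrow> 'c set set"
  assumes "finite C" and "2 \<le> card C" and "1 \<le> k" and "k \<le> card C - 1"
    and "thiele_rule C k f"
  shows "party_proportional C f \<longleftrightarrow> (\<forall>A. is_profile C A \<longrightarrow> f A = pav C k A)"
proof
  assume pp: "party_proportional C f"
  have abc: "abc_rule C k f" using assms(5) by (simp add: thiele_rule_def)
  obtain s :: "nat \<Rightarrow> real" where s0: "s 0 = 0" and fs: "\<forall>A. is_profile C A \<longrightarrow> f A = thiele_winners C k s A"
    using assms(5) unfolding thiele_rule_def by blast
  have cardC: "k + 1 \<le> card C" using assms(2,4) by linarith
  note K = key[OF assms(1) cardC _ _ _ abc fs pp s0]
  have s1: "s 1 > 0"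
    using K[of 0 2 1] assms(3) s0 by simp
  have delta: "\<And>x. 1 \<le> x \<Longrightarrow> x < k \<Longrightarrow> s (x+1) - s x = s 1 / real (x+1)"
  proof -
    fix x assume x1: "1 \<le> x" and xk: "x < k"
    define d where "d = s (x+1) - s x"
    define q where "q = real (x+1)"
    have q: "q > 0" unfolding q_def by simp
    have A: "real n * (s 1 - q * d) < d" if n: "n \<ge> 1" for n :: nat
    proof -
      have "real ((x+1)*n + 1) * s x + real n * s 1 < real ((x+1)*n + 1) * s (x+1)"
        using K[OF xk, of "(x+1)*n+1" n] n by (simp add: mult.commute)
      hence "(q * real n + 1) * s x + real n * s 1 < (q * real n + 1) * s (x+1)"
        unfolding q_def by (simp add: algebra_simps)
      thus ?thesis unfolding d_def by (simp add: algebra_simps)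
    qed
    have B: "real n * (q * d - s 1) < d" if n: "n \<ge> 1" for n :: nat
    proof -
      have ge: "(x+1)*n \<ge> 2" using mult_le_mono[of 2 "x+1" 1 n] x1 n by simp
      have "real ((x+1)*n - 1) * s (x+1) < real ((x+1)*n - 1) * s x + real n * s 1"
        using K[OF xk, of "(x+1)*n - 1" n] n ge by (simp add: mult.commute)
      moreover have "real ((x+1)*n - 1) = q * real n - 1" unfolding q_def using ge by (simp add: of_nat_diff algebra_simps)
      ultimately have "(q * real n - 1) * s (x+1) < (q * real n - 1) * s x + real n * s 1" by simp
      thus ?thesis unfolding d_def by (simp add: algebra_simps)
    qed
    have "s 1 - q * d \<le> 0" using arch_le0[of "s 1 - q * d" d] A by blast
    moreover have "q * d - s 1 \<le> 0" using arch_le0[of "q * d - s 1" d] B by blast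
    ultimately have "q * d = s 1" by linarith
    thus "s (x+1) - s x = s 1 / real (x+1)" using q unfolding d_def q_def by (simp add: field_simps)
  qed
  have spav: "\<And>x. x \<le> k \<Longrightarrow> s x = s 1 * pav_score x"
  proof -
    fix x show "x \<le> k \<Longrightarrow> s x = s 1 * pav_score x"
    proof (induction x)
      case 0 thus ?case using s0 by (simp add: pav_score_def)
    next
      case (Suc x)
      have IH: "s x = s 1 * pav_score x" using Suc by simp
      have "s (Suc x) - s x = s 1 / real (Suc x)"
      proof (cases "x = 0")
        case True thus ?thesis using s0 by simp
      next
        case False thus ?thesis using delta[of x] Suc.prems by simp
      qed
      thus ?case using IH by (simp add: pav_Suc algebra_simps)
    qed
  qed
  show "\<forall>A. is_profile C A \<longrightarrow> f A = pav C k A"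
  proof (intro allI impI)
    fix A assume prof: "is_profile C A"
    have sc: "thiele_score s A W = s 1 * thiele_score pav_score A W" if W: "W \<in> committees C k" for W
    proof -
      have finW: "finite W" "card W = k" using W assms(1) finite_subset by (auto simp: committees_def)
      have "\<And>i. card (the (A i) \<inter> W) \<le> k" using finW card_mono[OF finW(1)] by (metis Int_lower2)
      hence "\<And>i. s (card (the (A i) \<inter> W)) = s 1 * pav_score (card (the (A i) \<inter> W))" using spav by blast
      thus ?thesis unfolding thiele_score_def sum_distrib_left by (rule sum.cong[OF refl])
    qed
    have "thiele_winners C k s A = thiele_winners C k pav_score A"
      unfolding thiele_winners_def using sc s1 mult_le_cancel_left_pos[OF s1] by (metis (no_types, lifting))
    thus "f A = pav C k A" using fs prof by (simp add: pav_def)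
  qed
next
  assume h: "\<forall>A. is_profile C A \<longrightarrow> f A = pav C k A"
  show "party_proportional C f"
    unfolding party_proportional_def
  proof (intro allI impI ballI)
    fix A P W Qi Qj
    assume prof: "is_profile C A" and part: "party_partition C A P" and W: "W \<in> f A"
      and Qi: "Qi \<in> P" and Qj: "Qj \<in> P"
      and rat: "real (supporters A Qi) / real (card Qi) < real (supporters A Qj) / real (card Qj)"
      and sub: "Qi \<subseteq> W"
    have "W \<in> thiele_winners C k pav_score A" using W h prof by (simp add: pav_def)
    thus "Qj \<subseteq> W" using pav_pp[OF assms(1) prof part _ Qi Qj rat sub] by blast
  qed
qed

end
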